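(* Let $\mathscr{F}$ be a family of languages closed under rational transduction, union, product and Kleene closure. Let $S$ be a semigroup, $I, J$ sets, $P$ a $J \times I$ matrix with entries in $S \cup \{0\}$, and suppose $M = M^0(S; I, J; P)$ is finitely generated. If $L_\sigma(S) \in \mathscr{F}$ for some finite choice of generators $\sigma$ of $S$, then $L_\tau(M) \in \mathscr{F}$ for every finite choice of generators $\tau$ of $M$.
   Context: The Rees matrix semigroup with zero $M^0(S; I, J; P)$ (where $0 \notin S$) has elements $(I \times S \times J) \cup \{0\}$, $0$ is a zero, and $(i_1, g_1, j_1)(i_2, g_2, j_2) = (i_1, g_1 P_{j_1 i_2} g_2, j_2)$ if $P_{j_1 i_2} \in S$ and $=0$ if $P_{j_1 i_2} = 0$. For a semigroup $S$, $S^1$ denotes the monoid obtained by adjoining a new identity $1$ (even if $S$ already has one). A choice of generators for $S$ is a surjective morphism $\sigma : X^+ \to S$ from a free semigroup, finite if $X$ is finite; it extends uniquely to $\sigma^1 : X^* \to S^1$. Let $\overline{X} = \{\overline{x} : x \in X\}$ be a set of formal inverses, $\hat{X} = X \cup \overline{X}$. The loop automaton of $S$ with respect to $\sigma$ is the directed labelled graph with vertex set $S^1$, having for each $a \in S^1$ and $x \in X$ an edge from $a$ to $a(x\sigma)$ labelled $x$ and an edge from $a(x\sigma)$ to $a$ labelled $\overline{x}$. The loop problem $L_\sigma(S) \subseteq \hat{X}^*$ is the set of words labelling paths from $1$ to $1$ in this graph (including the empty word). A rational transduction is a relation between free monoids realised by a finite-state transducer. *)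

theory Defs
  imports Main
begin

definition semigroup_on :: "'a set \<Rightarrow> ('a \<Rightarrow> 'a \<Rightarrow> 'a) \<Rightarrow> bool" where
  "semigroup_on G m \<longleftrightarrow>
     (\<forall>a\<in>G. \<forall>b\<in>G. m a b \<in> G) \<and>
     (\<forall>a\<in>G. \<forall>b\<in>G. \<forall>c\<in>G. m (m a b) c = m a (m b c))"

fun word_eval :: "('a \<Rightarrow> 'a \<Rightarrow> 'a) \<Rightarrow> (nat \<Rightarrow> 'a) \<Rightarrow> nat list \<Rightarrow> 'a" where
  "word_eval m \<sigma> [] = undefined"
| "word_eval m \<sigma> [x] = \<sigma> x"
| "word_eval m \<sigma> (x # y # ys) = m (\<sigma> x) (word_eval m \<sigma> (y # ys))"

definition finite_gen_choice :: "'a set \<Rightarrow> ('a \<Rightarrow> 'a \<Rightarrow> 'a) \<Rightarrow> nat set \<Rightarrow> (nat \<Rightarrow> 'a) \<Rightarrow> bool" where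
  "finite_gen_choice G m X \<sigma> \<longleftrightarrow>
     finite X \<and> (\<forall>x\<in>X. \<sigma> x \<in> G) \<and>
     (\<forall>g\<in>G. \<exists>w. w \<noteq> [] \<and> set w \<subseteq> X \<and> word_eval m \<sigma> w = g)"

section \<open>Adjoining a new identity: S^1 = 'a option, with None the new identity 1\<close>

fun mult1 :: "('a \<Rightarrow> 'a \<Rightarrow> 'a) \<Rightarrow> 'a option \<Rightarrow> 'a option \<Rightarrow> 'a option" where
  "mult1 m None b = b"
| "mult1 m (Some a) None = Some a"
| "mult1 m (Some a) (Some b) = Some (m a b)"

text \<open>Letters of \<hat>X are encoded as natural numbers: the letter x is 2*x, its formal inverse
  \<overline>x is 2*x+1.\<close>
definition letter :: "nat \<Rightarrow> nat" where "letter x = 2 * x"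
definition inv_letter :: "nat \<Rightarrow> nat" where "inv_letter x = 2 * x + 1"

inductive loop_path :: "'a set \<Rightarrow> ('a \<Rightarrow> 'a \<Rightarrow> 'a) \<Rightarrow> nat set \<Rightarrow> (nat \<Rightarrow> 'a)
    \<Rightarrow> 'a option \<Rightarrow> nat list \<Rightarrow> 'a option \<Rightarrow> bool"
  for G m X \<sigma> where
  nil: "a \<in> insert None (Some ` G) \<Longrightarrow> loop_path G m X \<sigma> a [] a"
| fwd: "\<lbrakk>a \<in> insert None (Some ` G); x \<in> X;
         loop_path G m X \<sigma> (mult1 m a (Some (\<sigma> x))) w c\<rbrakk>
        \<Longrightarrow> loop_path G m X \<sigma> a (letter x # w) c"
| bwd: "\<lbrakk>a \<in> insert None (Some ` G); x \<in> X; mult1 m a (Some (\<sigma> x)) = b;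
         loop_path G m X \<sigma> a w c\<rbrakk>
        \<Longrightarrow> loop_path G m X \<sigma> b (inv_letter x # w) c"

definition loop_problem :: "'a set \<Rightarrow> ('a \<Rightarrow> 'a \<Rightarrow> 'a) \<Rightarrow> nat set \<Rightarrow> (nat \<Rightarrow> 'a) \<Rightarrow> nat list set" where
  "loop_problem G m X \<sigma> = {w. loop_path G m X \<sigma> None w None}"

text \<open>A finite transducer: finitely many transitions (q, u, v, q') reading word u and writing
  word v, an initial state and a set of final states.\<close>
inductive trans_run :: "(nat \<times> nat list \<times> nat list \<times> nat) set \<Rightarrow> nat \<Rightarrow> nat list \<Rightarrow> nat list \<Rightarrow> nat \<Rightarrow> bool"
  for \<delta> where
  stay: "trans_run \<delta> q [] [] q"
| step: "\<lbrakk>(q, u, v, q') \<in> \<delta>; trans_run \<delta> q' u' v' r\<rbrakk> \<Longrightarrow> trans_run \<delta> q (u @ u') (v @ v') r"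

definition rational_transduction :: "(nat list \<times> nat list) set \<Rightarrow> bool" where
  "rational_transduction T \<longleftrightarrow>
     (\<exists>\<delta> q0 Fin. finite \<delta> \<and> finite Fin \<and>
        T = {(u, v). \<exists>f\<in>Fin. trans_run \<delta> q0 u v f})"

definition lang_prod :: "nat list set \<Rightarrow> nat list set \<Rightarrow> nat list set" where
  "lang_prod L1 L2 = {u @ v | u v. u \<in> L1 \<and> v \<in> L2}"

definition lang_star :: "nat list set \<Rightarrow> nat list set" where
  "lang_star L = {concat ws | ws. set ws \<subseteq> L}"

section \<open>Rees matrix semigroup with zero; None is the zero\<close>

definition rees_carrier :: "'s set \<Rightarrow> 'i set \<Rightarrow> 'j set \<Rightarrow> ('i \<times> 's \<times> 'j) option set" where
  "rees_carrier S I J = insert None (Some ` (I \<times> S \<times> J))"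

fun rees_mult :: "('s \<Rightarrow> 's \<Rightarrow> 's) \<Rightarrow> ('j \<Rightarrow> 'i \<Rightarrow> 's option)
    \<Rightarrow> ('i \<times> 's \<times> 'j) option \<Rightarrow> ('i \<times> 's \<times> 'j) option \<Rightarrow> ('i \<times> 's \<times> 'j) option" where
  "rees_mult m P (Some (i1, g1, j1)) (Some (i2, g2, j2)) =
     (case P j1 i2 of None \<Rightarrow> None | Some p \<Rightarrow> Some (i1, m (m g1 p) g2, j2))"
| "rees_mult m P _ _ = None"

end

theory Submission
  imports Defs
begin


lemma letter_inj[simp]: "letter x = letter y \<longleftrightarrow> x = y" by (simp add: letter_def)
lemma inv_letter_inj[simp]: "inv_letter x = inv_letter y \<longleftrightarrow> x = y" by (simp add: inv_letter_def)
lemma letter_neq_inv[simp]: "letter x \<noteq> inv_letter y" "inv_letter y \<noteq> letter x"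
  by (simp_all add: letter_def inv_letter_def) presburger+

lemma nat_letter_cases: obtains x where "(n::nat) = letter x" | x where "n = inv_letter x"
  unfolding letter_def inv_letter_def by (metis dvd_mult_div_cancel odd_two_times_div_two_succ)

abbreviation VV :: "'a set \<Rightarrow> 'a option set" where "VV G \<equiv> insert None (Some ` G)"

definition lp_closed :: "'a set \<Rightarrow> ('a \<Rightarrow> 'a \<Rightarrow> 'a) \<Rightarrow> nat set \<Rightarrow> (nat \<Rightarrow> 'a) \<Rightarrow> bool" where
  "lp_closed G m X \<sigma> \<longleftrightarrow> (\<forall>a\<in>VV G. \<forall>x\<in>X. mult1 m a (Some (\<sigma> x)) \<in> VV G)"

lemma mult1_None_right[simp]: "mult1 m a None = a" by (cases a) auto
lemma mult1_Some_ne[simp]: "mult1 m a (Some b) \<noteq> None" by (cases a) auto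

lemma lp_start: "loop_path G m X \<sigma> a w c \<Longrightarrow> lp_closed G m X \<sigma> \<Longrightarrow> a \<in> VV G"
  by (induction rule: loop_path.induct) (auto simp: lp_closed_def)

lemma lp_end: "loop_path G m X \<sigma> a w c \<Longrightarrow> c \<in> VV G"
  by (induction rule: loop_path.induct) auto

lemma lp_nil: "loop_path G m X \<sigma> a [] c \<longleftrightarrow> a = c \<and> a \<in> VV G"
  by (auto elim: loop_path.cases intro: loop_path.nil)

lemma lp_letter: "loop_path G m X \<sigma> a (letter x # w) c \<longleftrightarrow>
    a \<in> VV G \<and> x \<in> X \<and> loop_path G m X \<sigma> (mult1 m a (Some (\<sigma> x))) w c"
  by (auto elim: loop_path.cases intro: loop_path.fwd)

lemma lp_inv: "loop_path G m X \<sigma> b (inv_letter x # w) c \<longleftrightarrow>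
    (\<exists>a. a \<in> VV G \<and> x \<in> X \<and> mult1 m a (Some (\<sigma> x)) = b \<and> loop_path G m X \<sigma> a w c)"
  apply (rule iffI)
   apply (erule loop_path.cases; auto)
  apply (auto intro: loop_path.bwd)
  done

lemma lp_appI: "loop_path G m X \<sigma> a w1 b \<Longrightarrow> loop_path G m X \<sigma> b w2 c \<Longrightarrow> loop_path G m X \<sigma> a (w1 @ w2) c"
  by (induction rule: loop_path.induct) (auto intro: loop_path.intros)

lemma lp_appD: "lp_closed G m X \<sigma> \<Longrightarrow> loop_path G m X \<sigma> a (w1 @ w2) c \<Longrightarrow>
   \<exists>b. loop_path G m X \<sigma> a w1 b \<and> loop_path G m X \<sigma> b w2 c"
proof (induction w1 arbitrary: a)
  case Nil
  then show ?case using lp_start[OF Nil(2) Nil(1)] by (auto simp: lp_nil)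
next
  case (Cons y w1)
  show ?case
  proof (cases y rule: nat_letter_cases)
    case (1 x)
    with Cons show ?thesis by (auto simp: lp_letter)
  next
    case (2 x)
    with Cons show ?thesis by (simp add: lp_inv) (metis Cons.IH)
  qed
qed

lemma lp_app: "lp_closed G m X \<sigma> \<Longrightarrow> loop_path G m X \<sigma> a (w1 @ w2) c \<longleftrightarrow>
   (\<exists>b. loop_path G m X \<sigma> a w1 b \<and> loop_path G m X \<sigma> b w2 c)"
  using lp_appD lp_appI by metis

inductive grun :: "('q \<times> nat list \<times> nat list \<times> 'q) set \<Rightarrow> 'q \<Rightarrow> nat list \<Rightarrow> nat list \<Rightarrow> 'q \<Rightarrow> bool"
  for \<delta> where
  gstay: "grun \<delta> q [] [] q"
| gstep: "(q, u, v, q') \<in> \<delta> \<Longrightarrow> grun \<delta> q' u' v' r \<Longrightarrow> grun \<delta> q (u @ u') (v @ v') r"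

lemma grun_rational:
  fixes \<delta> :: "('q \<times> nat list \<times> nat list \<times> 'q) set"
  assumes fd: "finite \<delta>" and fF: "finite Fin"
  shows "rational_transduction {(u, v). \<exists>f\<in>Fin. grun \<delta> q0 u v f}"
proof -
  define Q where "Q = insert q0 (Fin \<union> (\<lambda>(q,u,v,q'). q) ` \<delta> \<union> (\<lambda>(q,u,v,q'). q') ` \<delta>)"
  have fQ: "finite Q" using fd fF by (simp add: Q_def)
  obtain h :: "'q \<Rightarrow> nat" and n where hQ: "inj_on h Q" using finite_imp_inj_to_nat_seg[OF fQ] by blast
  define \<delta>' where "\<delta>' = (\<lambda>(q,u,v,q'). (h q, u, v, h q')) ` \<delta>"
  have fd': "finite \<delta>'" using fd by (simp add: \<delta>'_def)
  have A: "grun \<delta> q u v r \<Longrightarrow> q \<in> Q \<Longrightarrow> trans_run \<delta>' (h q) u v (h r) \<and> r \<in> Q" for q u v r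
  proof (induction rule: grun.induct)
    case (gstay q)
    then show ?case by (auto intro: trans_run.stay)
  next
    case (gstep q u v q' u' v' r)
    have "q' \<in> Q" using gstep(1) by (force simp: Q_def)
    moreover have "(h q, u, v, h q') \<in> \<delta>'" using gstep(1) by (force simp: \<delta>'_def)
    ultimately show ?case using gstep by (auto intro: trans_run.step)
  qed
  have B: "trans_run \<delta>' n u v m \<Longrightarrow> \<forall>q\<in>Q. h q = n \<longrightarrow> (\<exists>r\<in>Q. h r = m \<and> grun \<delta> q u v r)" for n u v m
  proof (induction rule: trans_run.induct)
    case (stay q)
    then show ?case by (auto intro: gstay)
  next
    case (step n u v n' u' v' m)
    show ?case
    proof (intro ballI impI)
      fix q assume q: "q \<in> Q" "h q = n"
      from step(1) obtain q1 q1' where t: "(q1, u, v, q1') \<in> \<delta>" "h q1 = n" "h q1' = n'"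
        by (auto simp: \<delta>'_def)
      have "q1 \<in> Q" "q1' \<in> Q" using t(1) by (force simp: Q_def)+
      hence "q1 = q" using q t(2) hQ by (auto dest: inj_onD)
      with step(3) \<open>q1' \<in> Q\<close> t obtain r where "r \<in> Q" "h r = m" "grun \<delta> q1' u' v' r" by blast
      then show "\<exists>r\<in>Q. h r = m \<and> grun \<delta> q (u @ u') (v @ v') r"
        using t(1) \<open>q1 = q\<close> by (auto intro: gstep)
    qed
  qed
  have q0Q: "q0 \<in> Q" by (simp add: Q_def)
  have FQ: "Fin \<subseteq> Q" by (auto simp: Q_def)
  have eq: "{(u, v). \<exists>f\<in>Fin. grun \<delta> q0 u v f} = {(u, v). \<exists>f\<in>h ` Fin. trans_run \<delta>' (h q0) u v f}"
  proof (safe)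
    fix u v f assume "f \<in> Fin" "grun \<delta> q0 u v f"
    then show "\<exists>f\<in>h ` Fin. trans_run \<delta>' (h q0) u v f" using A q0Q by blast
  next
    fix u v f assume f: "f \<in> Fin" "trans_run \<delta>' (h q0) u v (h f)"
    then obtain r where "r \<in> Q" "h r = h f" "grun \<delta> q0 u v r" using B q0Q by blast
    moreover have "r = f" using calculation f(1) FQ hQ by (auto dest: inj_onD)
    ultimately show "\<exists>f\<in>Fin. grun \<delta> q0 u v f" using f by blast
  qed
  show ?thesis unfolding rational_transduction_def eq
    using fd' fF by blast
qed




lemma we_in: "w \<noteq> [] \<Longrightarrow> set w \<subseteq> X \<Longrightarrow> (\<forall>x\<in>X. \<sigma> x \<in> G) \<Longrightarrow> semigroup_on G m \<Longrightarrow> word_eval m \<sigma> w \<in> G"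
  by (induction m \<sigma> w rule: word_eval.induct) (auto simp: semigroup_on_def)

lemma we_app: "w1 \<noteq> [] \<Longrightarrow> w2 \<noteq> [] \<Longrightarrow> set w1 \<subseteq> X \<Longrightarrow> set w2 \<subseteq> X \<Longrightarrow> (\<forall>x\<in>X. \<sigma> x \<in> G) \<Longrightarrow> semigroup_on G m \<Longrightarrow>
   word_eval m \<sigma> (w1 @ w2) = m (word_eval m \<sigma> w1) (word_eval m \<sigma> w2)"
proof (induction m \<sigma> w1 rule: word_eval.induct)
  case (1 m \<sigma>) then show ?case by simp
next
  case (2 m \<sigma> x) then show ?case by (cases w2) auto
next
  case (3 m \<sigma> x y ys)
  have "word_eval m \<sigma> (y # ys) \<in> G" "word_eval m \<sigma> w2 \<in> G"
    using 3 we_in[of "y#ys" X \<sigma> G m] we_in[of w2 X \<sigma> G m] by auto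
  moreover have "\<sigma> x \<in> G" using 3 by auto
  ultimately show ?case using 3 by (simp add: semigroup_on_def)
qed

datatype ('i, 'j) st = St1 | St0 | Nst 'i 'j | Zst 'i 'j | Dst | Fin0 | Fin1

definition rinv :: "nat list \<Rightarrow> nat list" where "rinv w = rev (map inv_letter w)"

lemma rinv_snoc[simp]: "rinv (w @ [x]) = inv_letter x # rinv w" by (simp add: rinv_def)
lemma rinv_Nil[simp]: "rinv [] = []" by (simp add: rinv_def)

locale rctx =
  fixes S :: "'s set" and mS :: "'s \<Rightarrow> 's \<Rightarrow> 's"
    and I :: "'i set" and J :: "'j set" and P :: "'j \<Rightarrow> 'i \<Rightarrow> 's option"
    and X :: "nat set" and \<sigma> :: "nat \<Rightarrow> 's"
    and Y :: "nat set" and \<tau> :: "nat \<Rightarrow> ('i \<times> 's \<times> 'j) option"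
  assumes sg: "semigroup_on S mS"
    and Pent: "\<And>j i. j \<in> J \<Longrightarrow> i \<in> I \<Longrightarrow> P j i = None \<or> the (P j i) \<in> S"
    and gS: "finite_gen_choice S mS X \<sigma>"
    and gM: "finite_gen_choice (rees_carrier S I J) (rees_mult mS P) Y \<tau>"
begin

abbreviation "loopS \<equiv> loop_path S mS X \<sigma>"
abbreviation "loopM \<equiv> loop_path (rees_carrier S I J) (rees_mult mS P) Y \<tau>"

definition eval1 :: "nat list \<Rightarrow> 's option" where
  "eval1 w = (if w = [] then None else Some (word_eval mS \<sigma> w))"

lemma sigX: "x \<in> X \<Longrightarrow> \<sigma> x \<in> S" using gS by (auto simp: finite_gen_choice_def)
lemma finX: "finite X" using gS by (auto simp: finite_gen_choice_def)
lemma finY: "finite Y" using gM by (auto simp: finite_gen_choice_def)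
lemma mS_in: "a \<in> S \<Longrightarrow> b \<in> S \<Longrightarrow> mS a b \<in> S" using sg by (auto simp: semigroup_on_def)
lemma mS_assoc: "a \<in> S \<Longrightarrow> b \<in> S \<Longrightarrow> c \<in> S \<Longrightarrow> mS (mS a b) c = mS a (mS b c)"
  using sg by (auto simp: semigroup_on_def)

lemma closedS: "lp_closed S mS X \<sigma>"
  unfolding lp_closed_def using sigX mS_in by auto

lemma mult1_in: "a \<in> VV S \<Longrightarrow> b \<in> VV S \<Longrightarrow> mult1 mS a b \<in> VV S"
  by (cases a; cases b) (auto simp: mS_in)

lemma mult1_assoc: "a \<in> VV S \<Longrightarrow> b \<in> VV S \<Longrightarrow> c \<in> VV S \<Longrightarrow>
   mult1 mS (mult1 mS a b) c = mult1 mS a (mult1 mS b c)"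
  by (cases a; cases b; cases c) (auto simp: mS_assoc)

lemma eval1_in: "set w \<subseteq> X \<Longrightarrow> eval1 w \<in> VV S"
  using we_in[of w X \<sigma> S mS] sigX sg by (auto simp: eval1_def)

lemma eval1_cons: "x \<in> X \<Longrightarrow> eval1 (x # w) = mult1 mS (Some (\<sigma> x)) (eval1 w)"
  by (cases w) (auto simp: eval1_def)

lemma eval1_snoc: "x \<in> X \<Longrightarrow> set w \<subseteq> X \<Longrightarrow> eval1 (w @ [x]) = mult1 mS (eval1 w) (Some (\<sigma> x))"
  using we_app[of w "[x]" X \<sigma> S mS] sigX sg by (auto simp: eval1_def)

lemma fwd_block: "a \<in> VV S \<Longrightarrow> set w \<subseteq> X \<Longrightarrow>
   loopS a (map letter w) c \<longleftrightarrow> c = mult1 mS a (eval1 w)"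
proof (induction w arbitrary: a)
  case Nil then show ?case by (auto simp: lp_nil eval1_def)
next
  case (Cons x w)
  have x: "x \<in> X" and w: "set w \<subseteq> X" using Cons by auto
  have a': "mult1 mS a (Some (\<sigma> x)) \<in> VV S" using mult1_in[OF Cons(2), of "Some (\<sigma> x)"] sigX x by auto
  have "loopS a (map letter (x # w)) c \<longleftrightarrow> loopS (mult1 mS a (Some (\<sigma> x))) (map letter w) c"
    using Cons(2) x by (simp add: lp_letter)
  also have "\<dots> \<longleftrightarrow> c = mult1 mS (mult1 mS a (Some (\<sigma> x))) (eval1 w)" using Cons.IH[OF a' w] .
  also have "mult1 mS (mult1 mS a (Some (\<sigma> x))) (eval1 w) = mult1 mS a (eval1 (x # w))"
    using mult1_assoc[OF Cons(2) _ eval1_in[OF w], of "Some (\<sigma> x)"] sigX x eval1_cons[OF x] by auto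
  finally show ?case .
qed

lemma inv_block: "set w \<subseteq> X \<Longrightarrow>
   loopS c (rinv w) a \<longleftrightarrow> a \<in> VV S \<and> c = mult1 mS a (eval1 w)"
proof (induction w arbitrary: c rule: rev_induct)
  case Nil then show ?case by (auto simp: lp_nil eval1_def)
next
  case (snoc x w)
  have x: "x \<in> X" and w: "set w \<subseteq> X" using snoc by auto
  have "loopS c (rinv (w @ [x])) a \<longleftrightarrow>
     (\<exists>b. b \<in> VV S \<and> mult1 mS b (Some (\<sigma> x)) = c \<and> a \<in> VV S \<and> b = mult1 mS a (eval1 w))"
    using x snoc.IH[OF w] by (simp add: lp_inv)
  also have "\<dots> \<longleftrightarrow> a \<in> VV S \<and> c = mult1 mS (mult1 mS a (eval1 w)) (Some (\<sigma> x))"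
    using mult1_in eval1_in[OF w] by auto
  also have "\<dots> \<longleftrightarrow> a \<in> VV S \<and> c = mult1 mS a (eval1 (w @ [x]))"
    using mult1_assoc[OF _ eval1_in[OF w], of a "Some (\<sigma> x)"] sigX x eval1_snoc[OF x w] by auto
  finally show ?case .
qed

end



context rctx begin

definition wd :: "'s \<Rightarrow> nat list" where
  "wd g = (SOME z. z \<noteq> [] \<and> set z \<subseteq> X \<and> word_eval mS \<sigma> z = g)"

lemma wd_props: "g \<in> S \<Longrightarrow> wd g \<noteq> [] \<and> set (wd g) \<subseteq> X \<and> word_eval mS \<sigma> (wd g) = g"
proof -
  assume g: "g \<in> S"
  have "\<forall>g\<in>S. \<exists>w. w \<noteq> [] \<and> set w \<subseteq> X \<and> word_eval mS \<sigma> w = g"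
    using gS unfolding finite_gen_choice_def by blast
  then have "\<exists>z. z \<noteq> [] \<and> set z \<subseteq> X \<and> word_eval mS \<sigma> z = g" using g by blast
  from someI_ex[OF this] show ?thesis unfolding wd_def .
qed

lemma wd_eval1: "g \<in> S \<Longrightarrow> eval1 (wd g) = Some g"
  using wd_props by (auto simp: eval1_def)

definition ti :: "nat \<Rightarrow> 'i" where "ti y = fst (the (\<tau> y))"
definition tg :: "nat \<Rightarrow> 's" where "tg y = fst (snd (the (\<tau> y)))"
definition tj :: "nat \<Rightarrow> 'j" where "tj y = snd (snd (the (\<tau> y)))"

definition W0 :: "nat \<Rightarrow> nat list" where "W0 y = wd (tg y)"
definition Wp :: "'j \<Rightarrow> nat \<Rightarrow> nat list" where "Wp j y = wd (mS (the (P j (ti y))) (tg y))"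
definition Cd :: "'j \<Rightarrow> nat \<Rightarrow> bool" where "Cd j y \<longleftrightarrow> \<tau> y = None \<or> P j (ti y) = None"
definition fin :: bool where "fin \<longleftrightarrow> finite I \<and> finite J"

lemma tau_cases: "y \<in> Y \<Longrightarrow> \<tau> y = None \<or> (\<tau> y = Some (ti y, tg y, tj y) \<and> ti y \<in> I \<and> tg y \<in> S \<and> tj y \<in> J)"
proof -
  assume y: "y \<in> Y"
  have "\<forall>x\<in>Y. \<tau> x \<in> rees_carrier S I J" using gM unfolding finite_gen_choice_def by blast
  then have "\<tau> y \<in> rees_carrier S I J" using y by blast
  then show ?thesis by (cases "\<tau> y") (auto simp: rees_carrier_def ti_def tg_def tj_def)
qed

definition \<delta> :: "(('i, 'j) st \<times> nat list \<times> nat list \<times> ('i, 'j) st) set" where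
  "\<delta> =
     {(St1, map letter (W0 y), [letter y], Nst (ti y) (tj y)) | y. y \<in> Y \<and> \<tau> y \<noteq> None \<and> fin}
   \<union> {(Nst i j, map letter (Wp j y), [letter y], Nst i (tj y)) | i j y.
        i \<in> I \<and> j \<in> J \<and> y \<in> Y \<and> \<tau> y \<noteq> None \<and> P j (ti y) \<noteq> None \<and> fin}
   \<union> {(Nst i (tj y), rinv (Wp j' y) @ [inv_letter x, letter x], [inv_letter y], Nst i j') | i j' y x.
        i \<in> I \<and> j' \<in> J \<and> y \<in> Y \<and> x \<in> X \<and> \<tau> y \<noteq> None \<and> P j' (ti y) \<noteq> None \<and> fin}
   \<union> {(Nst (ti y) (tj y), rinv (W0 y), [inv_letter y], Fin1) | y. y \<in> Y \<and> \<tau> y \<noteq> None \<and> fin}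
   \<union> {(Nst i j, [inv_letter x], [letter y], Dst) | i j x y. i \<in> I \<and> j \<in> J \<and> x \<in> X \<and> y \<in> Y \<and> Cd j y \<and> fin}
   \<union> {(Dst, [inv_letter x], [], Dst) | x. x \<in> X}
   \<union> {(St0, [letter x], [inv_letter y], Zst i j) | i j x y. i \<in> I \<and> j \<in> J \<and> x \<in> X \<and> y \<in> Y \<and> Cd j y \<and> fin}
   \<union> {(Zst i j, [letter x], [], Zst i j) | i j x. i \<in> I \<and> j \<in> J \<and> x \<in> X \<and> fin}
   \<union> {(Zst i j, [], [], Nst i j) | i j. i \<in> I \<and> j \<in> J \<and> fin}
   \<union> {(St1, [], [letter y], Fin0) | y. y \<in> Y \<and> \<tau> y = None}
   \<union> {(St0, [], [letter y], Fin0) | y. y \<in> Y}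
   \<union> {(St0, [], [inv_letter y], Fin0) | y. y \<in> Y}
   \<union> {(St0, [], [inv_letter y], Fin1) | y. y \<in> Y \<and> \<tau> y = None}"

lemma fin4: "finite A \<Longrightarrow> finite B \<Longrightarrow> finite C \<Longrightarrow> finite D \<Longrightarrow>
  finite {f a b c d | a b c d. a \<in> A \<and> b \<in> B \<and> c \<in> C \<and> d \<in> D \<and> Q a b c d}"
  by (rule finite_subset[of _ "(\<lambda>(a,b,c,d). f a b c d) ` (A \<times> B \<times> C \<times> D)"]) force+
lemma fin3: "finite A \<Longrightarrow> finite B \<Longrightarrow> finite C \<Longrightarrow>
  finite {f a b c | a b c. a \<in> A \<and> b \<in> B \<and> c \<in> C \<and> Q a b c}"
  by (rule finite_subset[of _ "(\<lambda>(a,b,c). f a b c) ` (A \<times> B \<times> C)"]) force+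
lemma fin2: "finite A \<Longrightarrow> finite B \<Longrightarrow>
  finite {f a b | a b. a \<in> A \<and> b \<in> B \<and> Q a b}"
  by (rule finite_subset[of _ "(\<lambda>(a,b). f a b) ` (A \<times> B)"]) force+
lemma fin1: "finite A \<Longrightarrow> finite {f a | a. a \<in> A \<and> Q a}"
  by simp
lemma fin1': "finite A \<Longrightarrow> finite {f a | a. a \<in> A}"
  by simp

lemma finite_delta: "finite \<delta>"
proof (cases fin)
  case False
  then show ?thesis using finX finY unfolding \<delta>_def by simp
next
  case True
  then have fI: "finite I" and fJ: "finite J" by (auto simp: fin_def)
  note f = finX finY fI fJ
  show ?thesis unfolding \<delta>_def
    apply (intro finite_UnI)
    apply (rule fin1, rule f)
    apply (rule fin3, (rule f)+)
    apply (rule fin4, (rule f)+)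
    apply (rule fin1, rule f)
    apply (rule fin4, (rule f)+)
    apply (rule fin1', rule f)
    apply (rule fin4, (rule f)+)
    apply (rule fin3, (rule f)+)
    apply (rule fin2, (rule f)+)
    apply (rule fin1, rule f)
    apply (rule fin1', rule f)
    apply (rule fin1', rule f)
    apply (rule fin1, rule f)
    done
qed

lemma d1: "y \<in> Y \<Longrightarrow> \<tau> y \<noteq> None \<Longrightarrow> fin \<Longrightarrow> (St1, map letter (W0 y), [letter y], Nst (ti y) (tj y)) \<in> \<delta>"
  unfolding \<delta>_def apply (rule UnI1, rule UnI1, rule UnI1, rule UnI1, rule UnI1, rule UnI1, rule UnI1, rule UnI1, rule UnI1, rule UnI1, rule UnI1, rule UnI1)
  by blast

lemma d2: "i \<in> I \<Longrightarrow> j \<in> J \<Longrightarrow> y \<in> Y \<Longrightarrow> \<tau> y \<noteq> None \<Longrightarrow> P j (ti y) \<noteq> None \<Longrightarrow> fin \<Longrightarrow> (Nst i j, map letter (Wp j y), [letter y], Nst i (tj y)) \<in> \<delta>"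
  unfolding \<delta>_def apply (rule UnI1, rule UnI1, rule UnI1, rule UnI1, rule UnI1, rule UnI1, rule UnI1, rule UnI1, rule UnI1, rule UnI1, rule UnI1, rule UnI2)
  by blast

lemma d3: "i \<in> I \<Longrightarrow> j' \<in> J \<Longrightarrow> y \<in> Y \<Longrightarrow> x \<in> X \<Longrightarrow> \<tau> y \<noteq> None \<Longrightarrow> P j' (ti y) \<noteq> None \<Longrightarrow> fin \<Longrightarrow> (Nst i (tj y), rinv (Wp j' y) @ [inv_letter x, letter x], [inv_letter y], Nst i j') \<in> \<delta>"
  unfolding \<delta>_def apply (rule UnI1, rule UnI1, rule UnI1, rule UnI1, rule UnI1, rule UnI1, rule UnI1, rule UnI1, rule UnI1, rule UnI1, rule UnI2)
  by blast

lemma d4: "y \<in> Y \<Longrightarrow> \<tau> y \<noteq> None \<Longrightarrow> fin \<Longrightarrow> (Nst (ti y) (tj y), rinv (W0 y), [inv_letter y], Fin1) \<in> \<delta>"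
  unfolding \<delta>_def apply (rule UnI1, rule UnI1, rule UnI1, rule UnI1, rule UnI1, rule UnI1, rule UnI1, rule UnI1, rule UnI1, rule UnI2)
  by blast

lemma d5: "i \<in> I \<Longrightarrow> j \<in> J \<Longrightarrow> x \<in> X \<Longrightarrow> y \<in> Y \<Longrightarrow> Cd j y \<Longrightarrow> fin \<Longrightarrow> (Nst i j, [inv_letter x], [letter y], Dst) \<in> \<delta>"
  unfolding \<delta>_def apply (rule UnI1, rule UnI1, rule UnI1, rule UnI1, rule UnI1, rule UnI1, rule UnI1, rule UnI1, rule UnI2)
  by blast

lemma d6: "x \<in> X \<Longrightarrow> (Dst, [inv_letter x], [], Dst) \<in> \<delta>"
  unfolding \<delta>_def apply (rule UnI1, rule UnI1, rule UnI1, rule UnI1, rule UnI1, rule UnI1, rule UnI1, rule UnI2)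
  by blast

lemma d7: "i \<in> I \<Longrightarrow> j \<in> J \<Longrightarrow> x \<in> X \<Longrightarrow> y \<in> Y \<Longrightarrow> Cd j y \<Longrightarrow> fin \<Longrightarrow> (St0, [letter x], [inv_letter y], Zst i j) \<in> \<delta>"
  unfolding \<delta>_def apply (rule UnI1, rule UnI1, rule UnI1, rule UnI1, rule UnI1, rule UnI1, rule UnI2)
  by blast

lemma d8: "i \<in> I \<Longrightarrow> j \<in> J \<Longrightarrow> x \<in> X \<Longrightarrow> fin \<Longrightarrow> (Zst i j, [letter x], [], Zst i j) \<in> \<delta>"
  unfolding \<delta>_def apply (rule UnI1, rule UnI1, rule UnI1, rule UnI1, rule UnI1, rule UnI2)
  by blast

lemma d9: "i \<in> I \<Longrightarrow> j \<in> J \<Longrightarrow> fin \<Longrightarrow> (Zst i j, [], [], Nst i j) \<in> \<delta>"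
  unfolding \<delta>_def apply (rule UnI1, rule UnI1, rule UnI1, rule UnI1, rule UnI2)
  by blast

lemma d10: "y \<in> Y \<Longrightarrow> \<tau> y = None \<Longrightarrow> (St1, [], [letter y], Fin0) \<in> \<delta>"
  unfolding \<delta>_def apply (rule UnI1, rule UnI1, rule UnI1, rule UnI2)
  by blast

lemma d11: "y \<in> Y \<Longrightarrow> (St0, [], [letter y], Fin0) \<in> \<delta>"
  unfolding \<delta>_def apply (rule UnI1, rule UnI1, rule UnI2)
  by blast

lemma d12: "y \<in> Y \<Longrightarrow> (St0, [], [inv_letter y], Fin0) \<in> \<delta>"
  unfolding \<delta>_def apply (rule UnI1, rule UnI2)
  by blast

lemma d13: "y \<in> Y \<Longrightarrow> \<tau> y = None \<Longrightarrow> (St0, [], [inv_letter y], Fin1) \<in> \<delta>"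
  unfolding \<delta>_def apply (rule UnI2)
  by blast

end



context rctx begin

lemma VM_nz[simp]: "Some (i, g, j) \<in> rees_carrier S I J \<longleftrightarrow> i \<in> I \<and> g \<in> S \<and> j \<in> J"
  by (auto simp: rees_carrier_def)
lemma VM_z[simp]: "None \<in> rees_carrier S I J"
  by (auto simp: rees_carrier_def)

lemma grun_Fin1: "grun \<delta> Fin1 v u r \<Longrightarrow> v = [] \<and> u = [] \<and> r = Fin1"
  by (erule grun.cases) (auto simp: \<delta>_def)

lemma grun_Dst': "grun \<delta> q v u r \<Longrightarrow> q = Dst \<Longrightarrow> u = [] \<and> r = Dst"
  by (induction rule: grun.induct) (auto simp: \<delta>_def)

lemma grun_Dst: "grun \<delta> Dst v u r \<Longrightarrow> u = [] \<and> r = Dst"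
  using grun_Dst' by blast

definition tgt :: "('i, 'j) st \<Rightarrow> ('i \<times> 's \<times> 'j) option option" where
  "tgt r = (if r = Fin1 then None else Some None)"

definition Inv :: "('i, 'j) st \<Rightarrow> 's option \<Rightarrow> nat list \<Rightarrow> ('i, 'j) st \<Rightarrow> bool" where
  "Inv q c u r \<longleftrightarrow> (case q of
     St1 \<Rightarrow> c = None \<longrightarrow> loopM None u (tgt r)
   | St0 \<Rightarrow> c = None \<longrightarrow> loopM (Some None) u (tgt r)
   | Nst i j \<Rightarrow> (\<forall>g. c = Some g \<longrightarrow> loopM (Some (Some (i, g, j))) u (tgt r))
   | Zst i j \<Rightarrow> (\<forall>g. c = Some g \<longrightarrow> (\<exists>g'\<in>S. loopM (Some (Some (i, g', j))) u (tgt r)))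
   | Dst \<Rightarrow> loopM (Some None) u (tgt r)
   | Fin0 \<Rightarrow> loopM (Some None) u (tgt r)
   | Fin1 \<Rightarrow> loopM None u (tgt r))"

lemma tau_Some: "y \<in> Y \<Longrightarrow> \<tau> y \<noteq> None \<Longrightarrow> \<tau> y = Some (ti y, tg y, tj y) \<and> ti y \<in> I \<and> tg y \<in> S \<and> tj y \<in> J"
  using tau_cases[of y] by auto

lemma S_start: "loopS (Some g) w c \<Longrightarrow> g \<in> S"
  using lp_start[OF _ closedS] by fastforce

lemma sound_step:
  assumes tr: "(q, v0, u0, q') \<in> \<delta>" and IH: "Inv q' b u' r" and p1: "loopS c v0 b" and gr: "grun \<delta> q' v' u' r"
    and p2: "loopS b v' None" and r: "r \<in> {Fin0, Fin1, Dst}"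
  shows "Inv q c (u0 @ u') r"
  using tr unfolding \<delta>_def
proof (elim UnE)
  assume "(q, v0, u0, q') \<in> {(St1, map letter (W0 y), [letter y], Nst (ti y) (tj y)) | y. y \<in> Y \<and> \<tau> y \<noteq> None \<and> fin}"
  then obtain y where e: "q = St1" "v0 = map letter (W0 y)" "u0 = [letter y]" "q' = Nst (ti y) (tj y)"
     and y: "y \<in> Y" "\<tau> y \<noteq> None" by blast
  note ty = tau_Some[OF y]
  show ?thesis unfolding e Inv_def
  proof (simp, intro impI)
    assume "c = None"
    then have "b = Some (tg y)" using p1 e fwd_block[of None "W0 y" b] wd_props[of "tg y"] wd_eval1[of "tg y"] ty
      by (simp add: W0_def)
    then have "loopM (Some (Some (ti y, tg y, tj y))) u' (tgt r)" using IH e by (simp add: Inv_def)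
    then show "loopM None (letter y # u') (tgt r)" using ty y by (auto intro!: loop_path.fwd)
  qed
next
  assume "(q, v0, u0, q') \<in> {(Nst i j, map letter (Wp j y), [letter y], Nst i (tj y)) | i j y.
        i \<in> I \<and> j \<in> J \<and> y \<in> Y \<and> \<tau> y \<noteq> None \<and> P j (ti y) \<noteq> None \<and> fin}"
  then obtain i j y where e: "q = Nst i j" "v0 = map letter (Wp j y)" "u0 = [letter y]" "q' = Nst i (tj y)"
     and y: "i \<in> I" "j \<in> J" "y \<in> Y" "\<tau> y \<noteq> None" "P j (ti y) \<noteq> None" by blast
  note ty = tau_Some[OF y(3,4)]
  obtain p where p: "P j (ti y) = Some p" using y by auto
  have pS: "p \<in> S" using Pent[of j "ti y"] p y ty by auto
  have pg: "mS p (tg y) \<in> S" using pS ty mS_in by auto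
  show ?thesis unfolding e Inv_def
  proof (simp, intro allI impI)
    fix g assume c: "c = Some g"
    have gS: "g \<in> S" using p1 c S_start by blast
    have "b = Some (mS g (mS p (tg y)))"
      using p1 c e fwd_block[of "Some g" "Wp j y" b] wd_props[OF pg] wd_eval1[OF pg] gS
      by (simp add: Wp_def p)
    also have "mS g (mS p (tg y)) = mS (mS g p) (tg y)" using mS_assoc gS pS ty by simp
    finally have "loopM (Some (Some (i, mS (mS g p) (tg y), tj y))) u' (tgt r)" using IH e by (simp add: Inv_def)
    then show "loopM (Some (Some (i, g, j))) (letter y # u') (tgt r)"
      using ty y gS p by (auto intro!: loop_path.fwd)
  qed
next
  assume "(q, v0, u0, q') \<in> {(Nst i (tj y), rinv (Wp j' y) @ [inv_letter x, letter x], [inv_letter y], Nst i j') | i j' y x.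
        i \<in> I \<and> j' \<in> J \<and> y \<in> Y \<and> x \<in> X \<and> \<tau> y \<noteq> None \<and> P j' (ti y) \<noteq> None \<and> fin}"
  then obtain i j' y x where e: "q = Nst i (tj y)" "v0 = rinv (Wp j' y) @ [inv_letter x, letter x]"
     "u0 = [inv_letter y]" "q' = Nst i j'"
     and y: "i \<in> I" "j' \<in> J" "y \<in> Y" "x \<in> X" "\<tau> y \<noteq> None" "P j' (ti y) \<noteq> None" by blast
  note ty = tau_Some[OF y(3,5)]
  obtain p where p: "P j' (ti y) = Some p" using y by auto
  have pS: "p \<in> S" using Pent[of j' "ti y"] p y ty by auto
  have pg: "mS p (tg y) \<in> S" using pS ty mS_in by auto
  show ?thesis unfolding e Inv_def
  proof (simp, intro allI impI)
    fix g assume c: "c = Some g"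
    from p1[unfolded e c] obtain a where a1: "loopS (Some g) (rinv (Wp j' y)) a" and a2: "loopS a [inv_letter x, letter x] b"
      using lp_app[OF closedS] by blast
    have aV: "a \<in> VV S" and ga: "Some g = mult1 mS a (Some (mS p (tg y)))"
      using a1 inv_block[of "Wp j' y" "Some g" a] wd_props[OF pg] wd_eval1[OF pg] by (auto simp: Wp_def p)
    from a2 obtain a'' where a3: "mult1 mS a'' (Some (\<sigma> x)) = a" "b = mult1 mS a'' (Some (\<sigma> x))"
      by (auto simp: lp_inv lp_letter lp_nil)
    have ab: "b = a" using a3 by simp
    have aN: "a \<noteq> None" using a3(1) mult1_Some_ne by metis
    obtain h where h: "a = Some h" using aN by (cases a) auto
    have hS: "h \<in> S" using aV h by auto
    have "loopM (Some (Some (i, h, j'))) u' (tgt r)" using IH e ab h by (simp add: Inv_def)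
    moreover have "g = mS (mS h p) (tg y)" using ga h mS_assoc hS pS ty by simp
    ultimately show "loopM (Some (Some (i, g, tj y))) (inv_letter y # u') (tgt r)"
      using ty y hS p by (auto intro!: loop_path.bwd[where a = "Some (Some (i, h, j'))"])
  qed
next
  assume "(q, v0, u0, q') \<in> {(Nst (ti y) (tj y), rinv (W0 y), [inv_letter y], Fin1) | y. y \<in> Y \<and> \<tau> y \<noteq> None \<and> fin}"
  then obtain y where e: "q = Nst (ti y) (tj y)" "v0 = rinv (W0 y)" "u0 = [inv_letter y]" "q' = Fin1"
     and y: "y \<in> Y" "\<tau> y \<noteq> None" by blast
  note ty = tau_Some[OF y]
  have g1: "v' = [] \<and> u' = [] \<and> r = Fin1" using gr e grun_Fin1 by simp
  then have bN: "b = None" using p2 by (simp add: lp_nil)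
  show ?thesis unfolding e Inv_def
  proof (simp, intro allI impI)
    fix g assume c: "c = Some g"
    have "g = tg y" using p1 c bN e inv_block[of "W0 y" "Some g" None] wd_props[of "tg y"] wd_eval1[of "tg y"] ty
      by (simp add: W0_def)
    then show "loopM (Some (Some (ti y, g, tj y))) (inv_letter y # u') (tgt r)"
      using g1 ty y by (auto simp: tgt_def lp_nil intro!: loop_path.bwd[where a = None])
  qed
next
  assume "(q, v0, u0, q') \<in> {(Nst i j, [inv_letter x], [letter y], Dst) | i j x y. i \<in> I \<and> j \<in> J \<and> x \<in> X \<and> y \<in> Y \<and> Cd j y \<and> fin}"
  then obtain i j x y where e: "q = Nst i j" "u0 = [letter y]" "q' = Dst"
     and y: "i \<in> I" "j \<in> J" "y \<in> Y" "Cd j y" by blast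
  have z: "mult1 (rees_mult mS P) (Some (Some (i, g, j))) (Some (\<tau> y)) = Some None" for g
    using y(4) tau_cases[OF y(3)] by (auto simp: Cd_def)
  show ?thesis unfolding e Inv_def
  proof (simp, intro allI impI)
    fix g assume c: "c = Some g"
    have gS: "g \<in> S" using p1 c S_start by blast
    show "loopM (Some (Some (i, g, j))) (letter y # u') (tgt r)"
      using IH e z y gS by (auto simp: Inv_def intro!: loop_path.fwd)
  qed
next
  assume "(q, v0, u0, q') \<in> {(Dst, [inv_letter x], [], Dst) | x. x \<in> X}"
  then show ?thesis using IH by (auto simp: Inv_def)
next
  assume "(q, v0, u0, q') \<in> {(St0, [letter x], [inv_letter y], Zst i j) | i j x y. i \<in> I \<and> j \<in> J \<and> x \<in> X \<and> y \<in> Y \<and> Cd j y \<and> fin}"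
  then obtain i j x y where e: "q = St0" "v0 = [letter x]" "u0 = [inv_letter y]" "q' = Zst i j"
     and y: "i \<in> I" "j \<in> J" "x \<in> X" "y \<in> Y" "Cd j y" by blast
  have z: "mult1 (rees_mult mS P) (Some (Some (i, g, j))) (Some (\<tau> y)) = Some None" for g
    using y(5) tau_cases[OF y(4)] by (auto simp: Cd_def)
  show ?thesis unfolding e Inv_def
  proof (simp, intro impI)
    assume c: "c = None"
    then have "b = Some (\<sigma> x)" using p1 e by (simp add: lp_letter lp_nil)
    then obtain g' where "g' \<in> S" "loopM (Some (Some (i, g', j))) u' (tgt r)" using IH e by (auto simp: Inv_def)
    then show "loopM (Some None) (inv_letter y # u') (tgt r)"
      using z y by (auto intro!: loop_path.bwd[where a = "Some (Some (i, g', j))"])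
  qed
next
  assume "(q, v0, u0, q') \<in> {(Zst i j, [letter x], [], Zst i j) | i j x. i \<in> I \<and> j \<in> J \<and> x \<in> X \<and> fin}"
  then obtain i j x where e: "q = Zst i j" "v0 = [letter x]" "u0 = []" "q' = Zst i j" by blast
  show ?thesis using p1 IH unfolding e by (auto simp: Inv_def lp_letter lp_nil)
next
  assume "(q, v0, u0, q') \<in> {(Zst i j, [], [], Nst i j) | i j. i \<in> I \<and> j \<in> J \<and> fin}"
  then obtain i j where e: "q = Zst i j" "v0 = []" "u0 = []" "q' = Nst i j" by blast
  have "b = c" using p1 e by (simp add: lp_nil)
  then show ?thesis using p2 IH S_start unfolding e by (auto simp: Inv_def)
next
  assume "(q, v0, u0, q') \<in> {(St1, [], [letter y], Fin0) | y. y \<in> Y \<and> \<tau> y = None}"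
  then obtain y where e: "q = St1" "u0 = [letter y]" "q' = Fin0" "y \<in> Y" "\<tau> y = None" by blast
  then show ?thesis using IH by (auto simp: Inv_def intro!: loop_path.fwd)
next
  assume "(q, v0, u0, q') \<in> {(St0, [], [letter y], Fin0) | y. y \<in> Y}"
  then obtain y where e: "q = St0" "u0 = [letter y]" "q' = Fin0" "y \<in> Y" by blast
  then show ?thesis using IH by (auto simp: Inv_def intro!: loop_path.fwd)
next
  assume "(q, v0, u0, q') \<in> {(St0, [], [inv_letter y], Fin0) | y. y \<in> Y}"
  then obtain y where e: "q = St0" "u0 = [inv_letter y]" "q' = Fin0" "y \<in> Y" by blast
  then show ?thesis using IH by (auto simp: Inv_def intro!: loop_path.bwd[where a = "Some None"])
next
  assume "(q, v0, u0, q') \<in> {(St0, [], [inv_letter y], Fin1) | y. y \<in> Y \<and> \<tau> y = None}"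
  then obtain y where e: "q = St0" "u0 = [inv_letter y]" "q' = Fin1" "y \<in> Y" "\<tau> y = None" by blast
  then show ?thesis using IH by (auto simp: Inv_def intro!: loop_path.bwd[where a = None])
qed

lemma sound: "grun \<delta> q v u r \<Longrightarrow> r \<in> {Fin0, Fin1, Dst} \<Longrightarrow> loopS c v None \<Longrightarrow> Inv q c u r"
proof (induction arbitrary: c rule: grun.induct)
  case (gstay q)
  then show ?case by (auto simp: Inv_def tgt_def lp_nil rees_carrier_def)
next
  case (gstep q v0 u0 q' v' u' r)
  from gstep.prems(2) obtain b where "loopS c v0 b" "loopS b v' None" using lp_app[OF closedS] by blast
  with gstep show ?case using sound_step by blast
qed

end



lemma star_nil: "[] \<in> lang_star L"
  unfolding lang_star_def by (rule CollectI, rule exI[of _ "[]"]) simp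
lemma star_cons: "w \<in> L \<Longrightarrow> l \<in> lang_star L \<Longrightarrow> w @ l \<in> lang_star L"
proof -
  assume w: "w \<in> L" and l: "l \<in> lang_star L"
  then obtain ws where "l = concat ws" "set ws \<subseteq> L" unfolding lang_star_def by blast
  then have "w @ l = concat (w # ws) \<and> set (w # ws) \<subseteq> L" using w by simp
  then show ?thesis unfolding lang_star_def by blast
qed
lemma prod_I: "u \<in> A \<Longrightarrow> v \<in> B \<Longrightarrow> u @ v \<in> lang_prod A B"
  unfolding lang_prod_def by blast

lemma rees_Some: "rees_mult m P a b = Some r \<Longrightarrow>
  \<exists>i1 g1 j1 i2 g2 j2 p. a = Some (i1, g1, j1) \<and> b = Some (i2, g2, j2) \<and> P j1 i2 = Some p \<and> r = (i1, m (m g1 p) g2, j2)"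
  by (cases "(m, P, a, b)" rule: rees_mult.cases) (auto split: option.splits)

lemma we_M_ends: "w \<noteq> [] \<Longrightarrow> word_eval (rees_mult m P) \<tau> w = Some (i, g, j) \<Longrightarrow>
   (\<exists>y\<in>set w. \<exists>g' j'. \<tau> y = Some (i, g', j')) \<and> (\<exists>y\<in>set w. \<exists>i' g'. \<tau> y = Some (i', g', j))"
proof (induction "rees_mult m P" \<tau> w arbitrary: i g j rule: word_eval.induct)
  case (2 \<sigma> x) then show ?case by auto
next
  case (3 \<sigma> x y ys)
  from rees_Some[OF 3(3)[simplified]] obtain g1 j1 i2 g2 p where
    "\<sigma> x = Some (i, g1, j1)" "word_eval (rees_mult m P) \<sigma> (y # ys) = Some (i2, g2, j)" by auto
  with 3(1)[of i2 g2 j] show ?case by fastforce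
qed simp

context rctx begin

lemma nonzero_fin: assumes "i \<in> I" "g \<in> S" "j \<in> J" shows fin
proof -
  have gen: "\<forall>a\<in>rees_carrier S I J. \<exists>w. w \<noteq> [] \<and> set w \<subseteq> Y \<and> word_eval (rees_mult mS P) \<tau> w = a"
    using gM unfolding finite_gen_choice_def by blast
  have "I \<subseteq> ti ` Y"
  proof
    fix i' assume i': "i' \<in> I"
    then have "Some (i', g, j) \<in> rees_carrier S I J" using assms by simp
    then obtain w where w: "w \<noteq> []" "set w \<subseteq> Y" "word_eval (rees_mult mS P) \<tau> w = Some (i', g, j)"
      using gen by blast
    then obtain y g' j' where "y \<in> set w" "\<tau> y = Some (i', g', j')" using we_M_ends[OF w(1) w(3)] by blast
    moreover have "y \<in> Y" using w(2) calculation(1) by blast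
    ultimately show "i' \<in> ti ` Y" by (intro image_eqI[where x = y]) (simp_all add: ti_def)
  qed
  moreover have "J \<subseteq> tj ` Y"
  proof
    fix j' assume j': "j' \<in> J"
    then have "Some (i, g, j') \<in> rees_carrier S I J" using assms by simp
    then obtain w where w: "w \<noteq> []" "set w \<subseteq> Y" "word_eval (rees_mult mS P) \<tau> w = Some (i, g, j')"
      using gen by blast
    then obtain y g' i' where "y \<in> set w" "\<tau> y = Some (i', g', j')" using we_M_ends[OF w(1) w(3)] by blast
    moreover have "y \<in> Y" using w(2) calculation(1) by blast
    ultimately show "j' \<in> tj ` Y" by (intro image_eqI[where x = y]) (simp_all add: tj_def)
  qed
  ultimately show fin unfolding fin_def
    using finite_subset[OF _ finite_imageI[OF finY]] by metis
qed

definition LS where "LS = loop_problem S mS X \<sigma>"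
definition E :: "('i, 'j) st \<Rightarrow> ('i, 'j) st set \<Rightarrow> nat list set" where
  "E q F = {u. \<exists>v\<in>LS. \<exists>f\<in>F. grun \<delta> q v u f}"
abbreviation "E11 \<equiv> E St1 {Fin1}"
abbreviation "E10 \<equiv> E St1 {Fin0, Dst}"
abbreviation "E01 \<equiv> E St0 {Fin1}"
abbreviation "E00 \<equiv> E St0 {Fin0, Dst}"
definition L1 where "L1 = lang_star (E11 \<union> lang_prod E10 (lang_prod (lang_star E00) E01))"
definition L0 where "L0 = lang_prod (lang_prod (lang_star E00) E01) L1"

lemma L1_nil: "[] \<in> L1" unfolding L1_def by (rule star_nil)
lemma L1_E11: "e \<in> E11 \<Longrightarrow> l \<in> L1 \<Longrightarrow> e @ l \<in> L1"
  unfolding L1_def by (rule star_cons) auto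
lemma L1_E10: "e \<in> E10 \<Longrightarrow> l \<in> L0 \<Longrightarrow> e @ l \<in> L1"
proof -
  assume e: "e \<in> E10" and l: "l \<in> L0"
  from l obtain s e1 l1 where "l = (s @ e1) @ l1" "s \<in> lang_star E00" "e1 \<in> E01" "l1 \<in> L1"
    unfolding L0_def lang_prod_def by blast
  moreover then have "e @ (s @ e1) \<in> E11 \<union> lang_prod E10 (lang_prod (lang_star E00) E01)"
    using e by (intro UnI2 prod_I) auto
  ultimately have "(e @ (s @ e1)) @ l1 \<in> L1" unfolding L1_def by (intro star_cons) auto
  then show ?thesis using \<open>l = (s @ e1) @ l1\<close> by simp
qed
lemma L0_E00: "e \<in> E00 \<Longrightarrow> l \<in> L0 \<Longrightarrow> e @ l \<in> L0"
proof -
  assume e: "e \<in> E00" and l: "l \<in> L0"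
  from l obtain s e1 l1 where "l = (s @ e1) @ l1" "s \<in> lang_star E00" "e1 \<in> E01" "l1 \<in> L1"
    unfolding L0_def lang_prod_def by blast
  then have "((e @ s) @ e1) @ l1 \<in> L0" unfolding L0_def using e by (intro prod_I star_cons) auto
  then show ?thesis using \<open>l = (s @ e1) @ l1\<close> by simp
qed
lemma L0_E01: "e \<in> E01 \<Longrightarrow> l \<in> L1 \<Longrightarrow> e @ l \<in> L0"
proof -
  assume "e \<in> E01" "l \<in> L1"
  then have "([] @ e) @ l \<in> L0" unfolding L0_def by (intro prod_I star_nil)
  then show ?thesis by simp
qed

lemma LS_I: "loopS None v None \<Longrightarrow> v \<in> LS" by (simp add: LS_def loop_problem_def)

lemma E_I: "loopS None v None \<Longrightarrow> grun \<delta> q v u f \<Longrightarrow> f \<in> F \<Longrightarrow> u \<in> E q F"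
  unfolding E_def using LS_I by blast

definition NZ :: "'i \<Rightarrow> 's \<Rightarrow> 'j \<Rightarrow> nat list \<Rightarrow> bool" where
  "NZ i g j u \<longleftrightarrow> (\<exists>u1 u2 v1 f. u = u1 @ u2 \<and> grun \<delta> (Nst i j) v1 u1 f \<and> loopS (Some g) v1 None \<and>
      ((f = Fin1 \<and> u2 \<in> L1) \<or> (f \<in> {Fin0, Dst} \<and> u2 \<in> L0)))"

definition Q :: "('i \<times> 's \<times> 'j) option option \<Rightarrow> nat list \<Rightarrow> bool" where
  "Q a u \<longleftrightarrow> (a = None \<longrightarrow> u \<in> L1) \<and> (a = Some None \<longrightarrow> u \<in> L0) \<and>
     (\<forall>i g j. a = Some (Some (i, g, j)) \<longrightarrow> NZ i g j u)"

lemma gstep1: "(q, v, u, q') \<in> \<delta> \<Longrightarrow> grun \<delta> q' v' u' r \<Longrightarrow> grun \<delta> q (v @ v') (u @ u') r"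
  by (rule gstep)

lemma grun_Z: "set ws \<subseteq> X \<Longrightarrow> i \<in> I \<Longrightarrow> j \<in> J \<Longrightarrow> fin \<Longrightarrow> grun \<delta> (Zst i j) v u f \<Longrightarrow>
   grun \<delta> (Zst i j) (map letter ws @ v) u f"
proof (induction ws)
  case (Cons x ws)
  have "(Zst i j, [letter x], [], Zst i j) \<in> \<delta>" using Cons by (intro d8) auto
  from gstep1[OF this Cons.IH] Cons show ?case by simp
qed simp

lemma grun_D: "set ws \<subseteq> X \<Longrightarrow> grun \<delta> Dst (map inv_letter ws) [] Dst"
proof (induction ws)
  case Nil then show ?case by (simp add: gstay)
next
  case (Cons x ws)
  have "(Dst, [inv_letter x], [], Dst) \<in> \<delta>" using Cons by (intro d6) auto
  from gstep1[OF this Cons.IH] Cons show ?case by simp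
qed

lemma S_word: "g \<in> S \<Longrightarrow> \<exists>z. z \<noteq> [] \<and> set z \<subseteq> X \<and> word_eval mS \<sigma> z = g"
  using wd_props by blast

end



context rctx begin

lemma VS_None[simp]: "loopS None [] None" by (simp add: lp_nil)

lemma c_fwd_1: assumes x: "x \<in> Y" and q: "Q (Some (\<tau> x)) w" shows "letter x # w \<in> L1"
proof (cases "\<tau> x = None")
  case True
  then have w: "w \<in> L0" using q by (simp add: Q_def)
  have "grun \<delta> St1 ([] @ []) ([letter x] @ []) Fin0" by (rule gstep1[OF d10[OF x True] gstay])
  then have "[letter x] \<in> E10" by (intro E_I[of "[]"]) auto
  from L1_E10[OF this w] show ?thesis by simp
next
  case False
  note ty = tau_Some[OF x False]
  have fn: fin using ty nonzero_fin by blast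
  have "NZ (ti x) (tg x) (tj x) w" using q ty by (simp add: Q_def)
  then obtain u1 u2 v1 f where u: "w = u1 @ u2" and g: "grun \<delta> (Nst (ti x) (tj x)) v1 u1 f"
    and p: "loopS (Some (tg x)) v1 None" and f: "(f = Fin1 \<and> u2 \<in> L1) \<or> (f \<in> {Fin0, Dst} \<and> u2 \<in> L0)"
    unfolding NZ_def by blast
  have g2: "grun \<delta> St1 (map letter (W0 x) @ v1) ([letter x] @ u1) f" by (rule gstep1[OF d1[OF x False fn] g])
  have "loopS None (map letter (W0 x)) (Some (tg x))"
    using fwd_block[of None "W0 x" "Some (tg x)"] wd_props[of "tg x"] wd_eval1[of "tg x"] ty
    by (simp add: W0_def)
  from lp_appI[OF this p] have p2: "loopS None (map letter (W0 x) @ v1) None" .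
  from f show ?thesis
  proof
    assume "f = Fin1 \<and> u2 \<in> L1"
    then have "[letter x] @ u1 \<in> E11" "u2 \<in> L1" using E_I[OF p2 g2] by auto
    from L1_E11[OF this] show ?thesis using u by simp
  next
    assume "f \<in> {Fin0, Dst} \<and> u2 \<in> L0"
    then have "[letter x] @ u1 \<in> E10" "u2 \<in> L0" using E_I[OF p2 g2] by auto
    from L1_E10[OF this] show ?thesis using u by simp
  qed
qed

lemma c_fwd_0: assumes x: "x \<in> Y" and w: "w \<in> L0" shows "letter x # w \<in> L0"
proof -
  have "grun \<delta> St0 ([] @ []) ([letter x] @ []) Fin0" by (rule gstep1[OF d11[OF x] gstay])
  then have "[letter x] \<in> E00" by (intro E_I[of "[]"]) auto
  from L0_E00[OF this w] show ?thesis by simp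
qed

lemma S_word_snoc: assumes "g \<in> S" obtains zs x0 where "x0 \<in> X" "set zs \<subseteq> X" "word_eval mS \<sigma> (zs @ [x0]) = g"
proof -
  obtain z where z: "z \<noteq> []" "set z \<subseteq> X" "word_eval mS \<sigma> z = g" using S_word[OF assms] by blast
  then obtain zs x0 where "z = zs @ [x0]" by (cases z rule: rev_exhaust) auto
  with z that show ?thesis by auto
qed

lemma S_word_cons: assumes "g \<in> S" obtains zs x0 where "x0 \<in> X" "set zs \<subseteq> X" "word_eval mS \<sigma> (x0 # zs) = g"
proof -
  obtain z where z: "z \<noteq> []" "set z \<subseteq> X" "word_eval mS \<sigma> z = g" using S_word[OF assms] by blast
  then obtain zs x0 where "z = x0 # zs" by (cases z) auto
  with z that show ?thesis by auto
qed

lemma rinv_rev: "rinv zs = map inv_letter (rev zs)" by (simp add: rinv_def rev_map)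

lemma c_fwd_nz: assumes ij: "i \<in> I" "g \<in> S" "j \<in> J" and x: "x \<in> Y"
  and q: "Q (Some (rees_mult mS P (Some (i, g, j)) (\<tau> x))) w"
  shows "NZ i g j (letter x # w)"
proof -
  have fn: fin using ij nonzero_fin by blast
  show ?thesis
  proof (cases "rees_mult mS P (Some (i, g, j)) (\<tau> x)")
    case None
    have cd: "Cd j x"
    proof (cases "\<tau> x = None")
      case False
      note ty = tau_Some[OF x False]
      show ?thesis using None ty by (cases "P j (ti x)") (auto simp: Cd_def)
    qed (simp add: Cd_def)
    have w: "w \<in> L0" using q None by (simp add: Q_def)
    obtain zs x0 where z: "x0 \<in> X" "set zs \<subseteq> X" "word_eval mS \<sigma> (zs @ [x0]) = g"
      using S_word_snoc[OF ij(2)] by blast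
    have gD: "grun \<delta> Dst (rinv zs) [] Dst" unfolding rinv_rev using z by (intro grun_D) auto
    have g2: "grun \<delta> (Nst i j) ([inv_letter x0] @ rinv zs) ([letter x] @ []) Dst"
      by (rule gstep1[OF d5[OF ij(1,3) z(1) x cd fn] gD])
    have p: "loopS (Some g) (rinv (zs @ [x0])) None"
      using inv_block[of "zs @ [x0]" "Some g" None] z by (simp add: eval1_def)
    show ?thesis unfolding NZ_def
      using g2 p w by (intro exI[of _ "[letter x]"] exI[of _ w] exI[of _ "rinv (zs @ [x0])"] exI[of _ Dst]) simp
  next
    case (Some r)
    from rees_Some[OF Some] obtain i2 g2 j2 p where
      t: "\<tau> x = Some (i2, g2, j2)" "P j i2 = Some p" "r = (i, mS (mS g p) g2, j2)" by auto
    note ty = tau_Some[OF x, unfolded t, simplified]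
    have tt: "ti x = i2" "tg x = g2" "tj x = j2" using ty by auto
    have pS: "p \<in> S" using Pent[of j i2] ij ty t by auto
    have pg: "mS p g2 \<in> S" using pS ty mS_in by auto
    have "NZ i (mS (mS g p) g2) j2 w" using q Some t by (simp add: Q_def)
    then obtain u1 u2 v1 f where u: "w = u1 @ u2" and g: "grun \<delta> (Nst i j2) v1 u1 f"
      and pp: "loopS (Some (mS (mS g p) g2)) v1 None" and f: "(f = Fin1 \<and> u2 \<in> L1) \<or> (f \<in> {Fin0, Dst} \<and> u2 \<in> L0)"
      unfolding NZ_def by blast
    have d: "(Nst i j, map letter (Wp j x), [letter x], Nst i j2) \<in> \<delta>"
      using d2[OF ij(1,3) x] t tt fn by simp
    have g3: "grun \<delta> (Nst i j) (map letter (Wp j x) @ v1) ([letter x] @ u1) f" by (rule gstep1[OF d g])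
    have "eval1 (Wp j x) = Some (mS p g2)" using wd_eval1[OF pg] by (simp add: Wp_def tt t)
    then have "loopS (Some g) (map letter (Wp j x)) (Some (mS g (mS p g2)))"
      using fwd_block[of "Some g" "Wp j x"] wd_props[OF pg] ij by (simp add: Wp_def tt t)
    moreover have "mS g (mS p g2) = mS (mS g p) g2" using mS_assoc ij pS ty by simp
    ultimately have p3: "loopS (Some g) (map letter (Wp j x) @ v1) None" using lp_appI pp by metis
    show ?thesis unfolding NZ_def
      using g3 p3 f u by (intro exI[of _ "[letter x] @ u1"] exI[of _ u2] exI[of _ "map letter (Wp j x) @ v1"] exI[of _ f]) simp
  qed
qed

end



context rctx begin

lemma c_bwd: assumes a: "a \<in> VV (rees_carrier S I J)" and x: "x \<in> Y"
  and b: "mult1 (rees_mult mS P) a (Some (\<tau> x)) = b" and q: "Q a w"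
  shows "Q b (inv_letter x # w)"
proof -
  have bN: "b \<noteq> None" using b mult1_Some_ne by metis
  have b0: "inv_letter x # w \<in> L0" if b0: "b = Some None"
  proof -
    consider (n) "a = None" | (z) "a = Some None" | (nz) i g j where "a = Some (Some (i, g, j))"
      by (metis option.exhaust prod_cases3)
    then show ?thesis
    proof cases
      case n
      then have tx: "\<tau> x = None" using b b0 by simp
      have w: "w \<in> L1" using q n by (simp add: Q_def)
      have "grun \<delta> St0 ([] @ []) ([inv_letter x] @ []) Fin1" by (rule gstep1[OF d13[OF x tx] gstay])
      then have "[inv_letter x] \<in> E01" by (intro E_I[of "[]"]) auto
      from L0_E01[OF this w] show ?thesis by simp
    next
      case z
      have w: "w \<in> L0" using q z by (simp add: Q_def)
      have "grun \<delta> St0 ([] @ []) ([inv_letter x] @ []) Fin0" by (rule gstep1[OF d12[OF x] gstay])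
      then have "[inv_letter x] \<in> E00" by (intro E_I[of "[]"]) auto
      from L0_E00[OF this w] show ?thesis by simp
    next
      case nz
      have ij: "i \<in> I" "g \<in> S" "j \<in> J" using a nz by auto
      have fn: fin using ij nonzero_fin by blast
      have rm: "rees_mult mS P (Some (i, g, j)) (\<tau> x) = None" using b b0 nz by simp
      have cd: "Cd j x"
      proof (cases "\<tau> x = None")
        case False
        note ty = tau_Some[OF x False]
        show ?thesis using rm ty by (cases "P j (ti x)") (auto simp: Cd_def)
      qed (simp add: Cd_def)
      have "NZ i g j w" using q nz by (simp add: Q_def)
      then obtain u1 u2 v1 f where u: "w = u1 @ u2" and g: "grun \<delta> (Nst i j) v1 u1 f"
        and p: "loopS (Some g) v1 None" and f: "(f = Fin1 \<and> u2 \<in> L1) \<or> (f \<in> {Fin0, Dst} \<and> u2 \<in> L0)"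
        unfolding NZ_def by blast
      obtain zs x0 where z: "x0 \<in> X" "set zs \<subseteq> X" "word_eval mS \<sigma> (x0 # zs) = g"
        using S_word_cons[OF ij(2)] by blast
      have g1: "grun \<delta> (Zst i j) ([] @ v1) ([] @ u1) f" by (rule gstep1[OF d9[OF ij(1,3) fn] g])
      have g2: "grun \<delta> (Zst i j) (map letter zs @ v1) u1 f" using grun_Z[OF z(2) ij(1,3) fn] g1 by simp
      have g3: "grun \<delta> St0 ([letter x0] @ (map letter zs @ v1)) ([inv_letter x] @ u1) f"
        by (rule gstep1[OF d7[OF ij(1,3) z(1) x cd fn] g2])
      have "loopS None (map letter (x0 # zs)) (Some g)"
        using fwd_block[of None "x0 # zs" "Some g"] z by (simp add: eval1_def)
      from lp_appI[OF this p] have p2: "loopS None ([letter x0] @ (map letter zs @ v1)) None" by simp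
      from f show ?thesis
      proof
        assume "f = Fin1 \<and> u2 \<in> L1"
        then have "[inv_letter x] @ u1 \<in> E01" "u2 \<in> L1" using E_I[OF p2 g3] by auto
        from L0_E01[OF this] show ?thesis using u by simp
      next
        assume "f \<in> {Fin0, Dst} \<and> u2 \<in> L0"
        then have "[inv_letter x] @ u1 \<in> E00" "u2 \<in> L0" using E_I[OF p2 g3] by auto
        from L0_E00[OF this] show ?thesis using u by simp
      qed
    qed
  qed
  have bnz: "NZ i g j (inv_letter x # w)" if bs: "b = Some (Some (i, g, j))" for i g j
  proof -
    consider (n) "a = None" | (z) "a = Some None" | (nz) i' h j' where "a = Some (Some (i', h, j'))"
      by (metis option.exhaust prod_cases3)
    then show ?thesis
    proof cases
      case n
      then have tx: "\<tau> x = Some (i, g, j)" using b bs by simp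
      then have tnn: "\<tau> x \<noteq> None" by simp
      note ty = tau_Some[OF x tnn]
      have tt: "ti x = i" "tg x = g" "tj x = j" using ty tx by auto
      have fn: fin using ty nonzero_fin by blast
      have w: "w \<in> L1" using q n by (simp add: Q_def)
      have g2: "grun \<delta> (Nst i j) (rinv (W0 x) @ []) ([inv_letter x] @ []) Fin1"
        using gstep1[OF d4[OF x tnn fn] gstay] tt by simp
      have p: "loopS (Some g) (rinv (W0 x)) None"
        using inv_block[of "W0 x" "Some g" None] wd_props[of "tg x"] wd_eval1[of "tg x"] ty tt
        by (simp add: W0_def)
      show ?thesis unfolding NZ_def
        using g2 p w by (intro exI[of _ "[inv_letter x]"] exI[of _ w] exI[of _ "rinv (W0 x)"] exI[of _ Fin1]) simp
    next
      case z
      then show ?thesis using b bs by simp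
    next
      case nz
      have ij: "i' \<in> I" "h \<in> S" "j' \<in> J" using a nz by auto
      have fn: fin using ij nonzero_fin by blast
      have rm: "rees_mult mS P (Some (i', h, j')) (\<tau> x) = Some (i, g, j)" using b bs nz by simp
      from rees_Some[OF rm] obtain i2 g2 j2 p where
        t: "\<tau> x = Some (i2, g2, j2)" "P j' i2 = Some p" "(i, g, j) = (i', mS (mS h p) g2, j2)" by auto
      have tnn: "\<tau> x \<noteq> None" using t by simp
      note ty = tau_Some[OF x tnn]
      have tt: "ti x = i2" "tg x = g2" "tj x = j2" using ty t by auto
      have pS: "p \<in> S" using Pent[of j' i2] ij ty t tt by auto
      have pg: "mS p g2 \<in> S" using pS ty tt mS_in by auto
      have "NZ i' h j' w" using q nz by (simp add: Q_def)
      then obtain u1 u2 v1 f where u: "w = u1 @ u2" and g: "grun \<delta> (Nst i' j') v1 u1 f"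
        and pp: "loopS (Some h) v1 None" and f: "(f = Fin1 \<and> u2 \<in> L1) \<or> (f \<in> {Fin0, Dst} \<and> u2 \<in> L0)"
        unfolding NZ_def by blast
      obtain zs x0 where z: "x0 \<in> X" "set zs \<subseteq> X" "word_eval mS \<sigma> (zs @ [x0]) = h"
        using S_word_snoc[OF ij(2)] by blast
      have ii: "i = i'" "j = j2" "g = mS (mS h p) g2" using t(3) by auto
      have d: "(Nst i' j2, rinv (Wp j' x) @ [inv_letter x0, letter x0], [inv_letter x], Nst i' j') \<in> \<delta>"
        using d3[OF ij(1) ij(3) x z(1) tnn _ fn] t tt by simp
      have g3: "grun \<delta> (Nst i' j2) ((rinv (Wp j' x) @ [inv_letter x0, letter x0]) @ v1) ([inv_letter x] @ u1) f"
        by (rule gstep1[OF d g])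
      have e1: "eval1 (Wp j' x) = Some (mS p g2)" using wd_eval1[OF pg] by (simp add: Wp_def tt t)
      have gg: "g = mS h (mS p g2)" using ii mS_assoc ij pS ty tt by simp
      have p1: "loopS (Some g) (rinv (Wp j' x)) (Some h)"
        using inv_block[of "Wp j' x" "Some g" "Some h"] wd_props[OF pg] ij e1 gg by (simp add: Wp_def tt t)
      have ez: "mult1 mS (eval1 zs) (Some (\<sigma> x0)) = Some h"
        using eval1_snoc[OF z(1) z(2)] z(3) by (simp add: eval1_def)
      have p2: "loopS (Some h) (inv_letter x0 # letter x0 # v1) None"
        unfolding lp_inv using eval1_in[OF z(2)] z(1) ez pp by (auto simp: lp_letter)
      have p3: "loopS (Some g) ((rinv (Wp j' x) @ [inv_letter x0, letter x0]) @ v1) None"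
        using lp_appI[OF p1 p2] by simp
      show ?thesis unfolding NZ_def ii(1,2)
        using g3 p3 f u by (intro exI[of _ "[inv_letter x] @ u1"] exI[of _ u2] exI[of _ "(rinv (Wp j' x) @ [inv_letter x0, letter x0]) @ v1"] exI[of _ f]) simp
    qed
  qed
  show ?thesis unfolding Q_def using bN b0 bnz by blast
qed

lemma complete: "loopM a u c \<Longrightarrow> c = None \<Longrightarrow> Q a u"
proof (induction rule: loop_path.induct)
  case (nil a)
  then show ?case by (simp add: Q_def L1_nil)
next
  case (fwd a x w c)
  have q: "Q (mult1 (rees_mult mS P) a (Some (\<tau> x))) w" using fwd by blast
  consider (n) "a = None" | (z) "a = Some None" | (nz) i g j where "a = Some (Some (i, g, j))"
    by (metis option.exhaust prod_cases3)
  then show ?case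
  proof cases
    case n
    then show ?thesis using c_fwd_1[OF fwd(2)] q by (simp add: Q_def)
  next
    case z
    then show ?thesis using c_fwd_0[OF fwd(2)] q by (simp add: Q_def)
  next
    case nz
    have ij: "i \<in> I" "g \<in> S" "j \<in> J" using fwd(1) nz by auto
    show ?thesis using c_fwd_nz[OF ij fwd(2)] q nz by (simp add: Q_def)
  qed
next
  case (bwd a x b w c)
  then show ?case using c_bwd by blast
qed

lemma sound_E:
  assumes "u \<in> E q F" "q \<in> {St0, St1}" "F \<subseteq> {Fin0, Fin1, Dst}"
  shows "\<exists>f\<in>F. (if q = St1 then loopM None u (tgt f) else loopM (Some None) u (tgt f))"
proof -
  obtain v f where v: "v \<in> LS" "f \<in> F" "grun \<delta> q v u f" using assms(1) unfolding E_def by blast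
  have lv: "loopS None v None" using v(1) by (simp add: LS_def loop_problem_def)
  have "Inv q None u f" using sound[OF v(3) _ lv] v(2) assms(3) by blast
  then show ?thesis using assms(2) v(2) by (auto simp: Inv_def)
qed

lemma E11_path: "u \<in> E11 \<Longrightarrow> loopM None u None"
  using sound_E[of u St1 "{Fin1}"] by (auto simp: tgt_def)
lemma E10_path: "u \<in> E10 \<Longrightarrow> loopM None u (Some None)"
  using sound_E[of u St1 "{Fin0, Dst}"] by (auto simp: tgt_def)
lemma E01_path: "u \<in> E01 \<Longrightarrow> loopM (Some None) u None"
  using sound_E[of u St0 "{Fin1}"] by (auto simp: tgt_def)
lemma E00_path: "u \<in> E00 \<Longrightarrow> loopM (Some None) u (Some None)"
  using sound_E[of u St0 "{Fin0, Dst}"] by (auto simp: tgt_def)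

lemma star_path: assumes "loopM p [] p" "\<And>e. e \<in> A \<Longrightarrow> loopM p e p" "u \<in> lang_star A"
  shows "loopM p u p"
proof -
  obtain ws where u: "u = concat ws" "set ws \<subseteq> A" using assms(3) unfolding lang_star_def by blast
  have "set ws \<subseteq> A \<Longrightarrow> loopM p (concat ws) p"
    by (induction ws) (auto intro: lp_appI assms(1,2))
  then show ?thesis using u by simp
qed

lemma L1_sound: "u \<in> L1 \<Longrightarrow> loopM None u None"
proof -
  assume u: "u \<in> L1"
  have A: "loopM None e None" if "e \<in> E11 \<union> lang_prod E10 (lang_prod (lang_star E00) E01)" for e
  proof -
    from that show ?thesis
    proof
      assume "e \<in> E11" then show ?thesis by (rule E11_path)
    next
      assume "e \<in> lang_prod E10 (lang_prod (lang_star E00) E01)"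
      then obtain e1 s e2 where e: "e = e1 @ (s @ e2)" "e1 \<in> E10" "s \<in> lang_star E00" "e2 \<in> E01"
        unfolding lang_prod_def by blast
      have "loopM (Some None) s (Some None)"
        by (rule star_path[OF _ E00_path e(3)]) (simp add: lp_nil)
      then show ?thesis using e E10_path E01_path lp_appI by metis
    qed
  qed
  show ?thesis
    by (rule star_path[of None "E11 \<union> lang_prod E10 (lang_prod (lang_star E00) E01)", OF _ A])
      (simp_all add: lp_nil u[unfolded L1_def])
qed

lemma loop_M_eq: "loop_problem (rees_carrier S I J) (rees_mult mS P) Y \<tau> = L1"
  unfolding loop_problem_def using L1_sound complete by (auto simp: Q_def)

lemma E_rat: "finite F \<Longrightarrow> E q F = {(v, u). \<exists>f\<in>F. grun \<delta> q v u f} `` LS \<and>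
   rational_transduction {(v, u). \<exists>f\<in>F. grun \<delta> q v u f}"
  using grun_rational[OF finite_delta] unfolding E_def by blast

end



theorem theorem4p2:
  fixes \<F> :: "nat list set set"
    and S :: "'s set" and mS :: "'s \<Rightarrow> 's \<Rightarrow> 's"
    and I :: "'i set" and J :: "'j set" and P :: "'j \<Rightarrow> 'i \<Rightarrow> 's option"
  assumes trans_closed: "\<And>L T. L \<in> \<F> \<Longrightarrow> rational_transduction T \<Longrightarrow> T `` L \<in> \<F>"
    and union_closed: "\<And>L1 L2. L1 \<in> \<F> \<Longrightarrow> L2 \<in> \<F> \<Longrightarrow> L1 \<union> L2 \<in> \<F>"
    and prod_closed: "\<And>L1 L2. L1 \<in> \<F> \<Longrightarrow> L2 \<in> \<F> \<Longrightarrow> lang_prod L1 L2 \<in> \<F>"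
    and star_closed: "\<And>L. L \<in> \<F> \<Longrightarrow> lang_star L \<in> \<F>"
    and S_semigroup: "semigroup_on S mS"
    and P_entries: "\<And>j i. j \<in> J \<Longrightarrow> i \<in> I \<Longrightarrow> P j i = None \<or> the (P j i) \<in> S"
    and M_fg: "\<exists>Y \<tau>. finite_gen_choice (rees_carrier S I J) (rees_mult mS P) Y \<tau>"
    and S_loop: "\<exists>X \<sigma>. finite_gen_choice S mS X \<sigma> \<and> loop_problem S mS X \<sigma> \<in> \<F>"
  shows "\<forall>Y \<tau>. finite_gen_choice (rees_carrier S I J) (rees_mult mS P) Y \<tau> \<longrightarrow>
           loop_problem (rees_carrier S I J) (rees_mult mS P) Y \<tau> \<in> \<F>"
proof (intro allI impI)
  fix Y \<tau> assume gM: "finite_gen_choice (rees_carrier S I J) (rees_mult mS P) Y \<tau>"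
  obtain X \<sigma> where gS: "finite_gen_choice S mS X \<sigma>" and LF: "loop_problem S mS X \<sigma> \<in> \<F>"
    using S_loop by blast
  interpret r: rctx S mS I J P X \<sigma> Y \<tau>
    by unfold_locales (assumption | rule S_semigroup P_entries gS gM)+
  have EF: "r.E q F \<in> \<F>" if "finite F" for q F
  proof -
    note er = r.E_rat[OF that, of q]
    have LS: "r.LS \<in> \<F>" using LF unfolding r.LS_def .
    show ?thesis unfolding conjunct1[OF er] by (rule trans_closed[OF LS conjunct2[OF er]])
  qed
  have "r.L1 \<in> \<F>" unfolding r.L1_def
    by (intro star_closed union_closed prod_closed EF) simp_all
  then show "loop_problem (rees_carrier S I J) (rees_mult mS P) Y \<tau> \<in> \<F>"
    using r.loop_M_eq by simp
qed

end
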